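(* Let $\mathbf L=\{L_1,\dots,L_n\}$ be a finite multiset of positive rationals and $k\in\mathbb N_{>0}$, and suppose $L_{co}\neq l^\star$. Then $(I_{co},\,i\mapsto 1,\,i\mapsto k)$ is an admissible restriction. Moreover $|\mathcal C(I_{co},1,k)|=k\cdot|I_{co}|\le k\cdot\min(k-1,n)$, with equality when the $L_i$ are pairwise distinct; in particular the worst-case size is $\Theta(k\cdot\min(k,n))$.
   Context: For $l\in\mathbb Q_{>0}$: $m(l)=\sum_{i=1}^n\lfloor L_i/l\rfloor$, $c(l)=\sum_i(\lceil L_i/l\rceil-1)$; $l$ is feasible if $m(l)\ge k$; $l^\star$ is the unique optimal cut length (feasible length minimizing $c$ among feasible lengths; equals the largest feasible length). $L^{(k)}$ denotes the $k$-th largest element of $\mathbf L$ counted with multiplicity. The cut-off length is $L_{co}=L^{(k)}$ if $k\le n$ and $L_{co}=0$ if $k>n$; $I_{co}=\{i\in[1..n]: L_i>L_{co}\}$. Candidate multiset: $\mathcal C(I,f_l,f_u)=\biguplus_{i\in I}\{L_i/j: j\in\mathbb N,\ f_l(i)\le j\le f_u(i)\}$ (one occurrence per pair $(i,j)$). A triple $(I,f_l,f_u)$ with $I\subseteq[1..n]$, $f_l,f_u:I\to\mathbb N_{>0}$ is an admissible restriction if (i) for all $i\in I$, $f_l(i)=1$ or $L_i/(f_l(i)-1)$ is infeasible; (ii) for all $i\in I$, $L_i/f_u(i)$ is feasible; (iii) for all $i'\notin I$, $L_{i'}$ is feasible and $L_{i'}\ne l^\star$. *)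

theory Defs
  imports Complex_Main "HOL-Library.Multiset"
begin

text \<open>The multiset L = {L_1,...,L_n} is represented by a function L :: nat => rat
  on the index set {1..n}.\<close>

definition m_cnt :: "(nat \<Rightarrow> rat) \<Rightarrow> nat \<Rightarrow> rat \<Rightarrow> int" where
  "m_cnt L n l = (\<Sum>i\<in>{1..n}. \<lfloor>L i / l\<rfloor>)"

definition c_cost :: "(nat \<Rightarrow> rat) \<Rightarrow> nat \<Rightarrow> rat \<Rightarrow> int" where
  "c_cost L n l = (\<Sum>i\<in>{1..n}. \<lceil>L i / l\<rceil> - 1)"

definition feasible :: "(nat \<Rightarrow> rat) \<Rightarrow> nat \<Rightarrow> nat \<Rightarrow> rat \<Rightarrow> bool" where
  "feasible L n k l \<longleftrightarrow> l > 0 \<and> m_cnt L n l \<ge> int k"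

definition lstar :: "(nat \<Rightarrow> rat) \<Rightarrow> nat \<Rightarrow> nat \<Rightarrow> rat" where
  "lstar L n k = (GREATEST l. feasible L n k l)"

definition kth_largest :: "(nat \<Rightarrow> rat) \<Rightarrow> nat \<Rightarrow> nat \<Rightarrow> rat" where
  "kth_largest L n k = rev (sort (map L [1..<n+1])) ! (k - 1)"

definition cutoff :: "(nat \<Rightarrow> rat) \<Rightarrow> nat \<Rightarrow> nat \<Rightarrow> rat" where
  "cutoff L n k = (if k \<le> n then kth_largest L n k else 0)"

definition Ico :: "(nat \<Rightarrow> rat) \<Rightarrow> nat \<Rightarrow> nat \<Rightarrow> nat set" where
  "Ico L n k = {i \<in> {1..n}. L i > cutoff L n k}"

definition cands :: "(nat \<Rightarrow> rat) \<Rightarrow> nat set \<Rightarrow> (nat \<Rightarrow> nat) \<Rightarrow> (nat \<Rightarrow> nat) \<Rightarrow> rat multiset" where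
  "cands L I fl fu = image_mset (\<lambda>(i, j). L i / of_nat j) (mset_set (SIGMA i:I. {fl i..fu i}))"

definition admissible ::
  "(nat \<Rightarrow> rat) \<Rightarrow> nat \<Rightarrow> nat \<Rightarrow> nat set \<Rightarrow> (nat \<Rightarrow> nat) \<Rightarrow> (nat \<Rightarrow> nat) \<Rightarrow> bool" where
  "admissible L n k I fl fu \<longleftrightarrow>
     I \<subseteq> {1..n} \<and> (\<forall>i\<in>I. fl i > 0 \<and> fu i > 0) \<and>
     (\<forall>i\<in>I. fl i = 1 \<or> \<not> feasible L n k (L i / of_nat (fl i - 1))) \<and>
     (\<forall>i\<in>I. feasible L n k (L i / of_nat (fu i))) \<and>
     (\<forall>i'\<in>{1..n} - I. feasible L n k (L i') \<and> L i' \<noteq> lstar L n k)"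

end

theory Submission
  imports Defs
begin

lemma count_sort:
  fixes L :: "nat \<Rightarrow> rat" and n :: nat
  assumes zs_def: "zs = sort (map L [1..<n+1])"
  shows "card {i\<in>{1..n}. P (L i)} = card {i. i < n \<and> P (zs ! i)}"
proof -
  have "card {i\<in>{1..n}. P (L i)} = length (filter (P \<circ> L) [1..<n+1])"
    by (subst distinct_length_filter) (auto intro: arg_cong[where f=card])
  also have "\<dots> = length (filter P (map L [1..<n+1]))" by (simp add: filter_map)
  also have "\<dots> = size (filter_mset P (mset (map L [1..<n+1])))"
    by (metis mset_filter size_mset)
  also have "\<dots> = size (filter_mset P (mset zs))" by (simp add: zs_def)
  also have "\<dots> = length (filter P zs)" by (metis mset_filter size_mset)
  also have "\<dots> = card {i. i < n \<and> P (zs ! i)}"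
    by (simp add: length_filter_conv_card zs_def)
  finally show ?thesis .
qed

lemma m_ge_card:
  assumes "0 < l" "l \<le> c" "\<forall>i\<in>{1..n}. L i > 0"
  shows "m_cnt L n l \<ge> int (card {i\<in>{1..n}. L i \<ge> c})"
proof -
  have "int (card {i\<in>{1..n}. L i \<ge> c}) = (\<Sum>i\<in>{1..n}. if L i \<ge> c then 1 else 0)"
    by (simp add: sum.If_cases Int_def conj_commute)
  also have "\<dots> \<le> (\<Sum>i\<in>{1..n}. \<lfloor>L i / l\<rfloor>)"
  proof (rule sum_mono)
    fix i assume i: "i \<in> {1..n}"
    show "(if L i \<ge> c then 1 else 0) \<le> \<lfloor>L i / l\<rfloor>"
    proof (cases "L i \<ge> c")
      case True
      then have "1 \<le> L i / l" using assms by (simp add: field_simps)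
      then show ?thesis using True by (simp add: one_le_floor)
    next
      case False
      have "0 \<le> L i / l" using assms i by (simp add: less_imp_le)
      then show ?thesis using False by simp
    qed
  qed
  finally show ?thesis by (simp add: m_cnt_def)
qed

lemma feas_up:
  assumes F: "feasible L n k l" and pos: "\<forall>i\<in>{1..n}. L i > 0" and k: "k > 0"
  shows "\<exists>x\<in>(\<lambda>(i,j). L i / of_nat j) ` ({1..n} \<times> {1..k}). feasible L n k x \<and> l \<le> x"
proof -
  have l0: "l > 0" and mk: "(\<Sum>i\<in>{1..n}. \<lfloor>L i / l\<rfloor>) \<ge> int k"
    using F by (auto simp: feasible_def m_cnt_def)
  define T where "T = {i\<in>{1..n}. L i \<ge> l}"
  define j where "j i = nat (min \<lfloor>L i / l\<rfloor> (int k))" for i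
  have fl0: "\<lfloor>L i / l\<rfloor> = 0" if "i \<in> {1..n}" "i \<notin> T" for i
    using that pos l0 by (auto simp: T_def floor_eq_iff field_simps less_imp_le)
  have jT: "j i \<ge> 1 \<and> j i \<le> k" if "i \<in> T" for i
  proof -
    have "1 \<le> L i / l" using that l0 by (simp add: T_def field_simps)
    then have "1 \<le> \<lfloor>L i / l\<rfloor>" by (simp add: one_le_floor)
    then show ?thesis using k unfolding j_def by linarith
  qed
  have jle: "of_nat (j i) \<le> L i / l" if "i \<in> T" for i
  proof -
    have m0: "min \<lfloor>L i / l\<rfloor> (int k) \<ge> 0" using jT[OF that] unfolding j_def by linarith
    have "(of_nat (j i)::rat) = of_int (min \<lfloor>L i / l\<rfloor> (int k))"
      using m0 by (simp add: j_def)
    also have "\<dots> \<le> of_int \<lfloor>L i / l\<rfloor>" by simp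
    also have "\<dots> \<le> L i / l" by (rule of_int_floor_le)
    finally show ?thesis .
  qed
  have sumj: "(\<Sum>i\<in>T. int (j i)) \<ge> int k"
  proof (cases "\<exists>i\<in>T. \<lfloor>L i / l\<rfloor> \<ge> int k")
    case True
    then obtain i0 where i0: "i0 \<in> T" "\<lfloor>L i0 / l\<rfloor> \<ge> int k" by blast
    have "int k = int (j i0)" using i0 by (simp add: j_def)
    also have "\<dots> \<le> (\<Sum>i\<in>T. int (j i))"
      by (rule member_le_sum) (use i0 in \<open>auto simp: T_def\<close>)
    finally show ?thesis .
  next
    case False
    then have eq: "int (j i) = \<lfloor>L i / l\<rfloor>" if "i \<in> T" for i
      using that jT[OF that] by (auto simp: j_def)
    have "(\<Sum>i\<in>{1..n}. \<lfloor>L i / l\<rfloor>) = (\<Sum>i\<in>T. \<lfloor>L i / l\<rfloor>)"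
      by (rule sum.mono_neutral_right) (auto simp: T_def fl0)
    also have "\<dots> = (\<Sum>i\<in>T. int (j i))" using eq by simp
    finally show ?thesis using mk by simp
  qed
  have Tne: "T \<noteq> {}" using sumj k by auto
  have finT: "finite T" by (simp add: T_def)
  define x where "x = Min ((\<lambda>i. L i / of_nat (j i)) ` T)"
  obtain i1 where i1: "i1 \<in> T" "x = L i1 / of_nat (j i1)"
  proof -
    have "x \<in> (\<lambda>i. L i / of_nat (j i)) ` T" unfolding x_def using finT Tne by (intro Min_in) auto
    then show ?thesis using that by blast
  qed
  have xle: "x \<le> L i / of_nat (j i)" if "i \<in> T" for i
    unfolding x_def using finT that by (intro Min_le) auto
  have lx: "l \<le> x"
  proof -
    have "0 < (of_nat (j i1)::rat)" using jT[OF i1(1)] by simp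
    then have "l \<le> L i1 / of_nat (j i1)" using jle[OF i1(1)] l0
      by (simp add: field_simps)
    then show ?thesis using i1 by simp
  qed
  have x0: "x > 0" using lx l0 by simp
  have "int k \<le> (\<Sum>i\<in>T. int (j i))" by (rule sumj)
  also have "\<dots> \<le> (\<Sum>i\<in>T. \<lfloor>L i / x\<rfloor>)"
  proof (rule sum_mono)
    fix i assume iT: "i \<in> T"
    have jp: "0 < (of_nat (j i)::rat)" using jT[OF iT] by simp
    have "x * of_nat (j i) \<le> L i" using xle[OF iT] jp by (simp add: field_simps)
    then have "of_nat (j i) \<le> L i / x" using x0 by (simp add: field_simps)
    then show "int (j i) \<le> \<lfloor>L i / x\<rfloor>" by (simp add: le_floor_iff)
  qed
  also have "\<dots> \<le> (\<Sum>i\<in>{1..n}. \<lfloor>L i / x\<rfloor>)"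
    by (rule sum_mono2) (use pos x0 in \<open>auto simp: T_def less_imp_le\<close>)
  finally have "feasible L n k x" using x0 by (simp add: feasible_def m_cnt_def)
  moreover have "x \<in> (\<lambda>(i,j). L i / of_nat j) ` ({1..n} \<times> {1..k})"
    using i1 jT[OF i1(1)] by (auto simp: T_def intro!: image_eqI[where x="(i1, j i1)"])
  ultimately show ?thesis using lx by blast
qed

lemma lstar_props:
  assumes F: "feasible L n k l0" and pos: "\<forall>i\<in>{1..n}. L i > 0" and k: "k > 0"
  shows "feasible L n k (lstar L n k) \<and> (\<forall>y. feasible L n k y \<longrightarrow> y \<le> lstar L n k)"
proof -
  define S where "S = {x \<in> (\<lambda>(i,j). L i / of_nat j) ` ({1..n} \<times> {1..k}). feasible L n k x}"
  have finS: "finite S" by (simp add: S_def)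
  have up: "\<exists>x\<in>S. l \<le> x" if "feasible L n k l" for l
    using feas_up[OF that pos k] by (auto simp: S_def)
  have Sne: "S \<noteq> {}" using up[OF F] by auto
  define g where "g = Max S"
  have gS: "g \<in> S" unfolding g_def using finS Sne by (rule Max_in)
  have gf: "feasible L n k g" using gS by (simp add: S_def)
  have gm: "y \<le> g" if fy: "feasible L n k y" for y
  proof -
    obtain x where "x \<in> S" "y \<le> x" using up[OF fy] by blast
    moreover have "x \<le> g" unfolding g_def using finS \<open>x \<in> S\<close> by (rule Max_ge)
    ultimately show ?thesis by simp
  qed
  have "lstar L n k = g" unfolding lstar_def using gf gm by (intro Greatest_equality) auto
  then show ?thesis using gf gm by simp
qed

lemma size_cands: "finite I \<Longrightarrow> size (cands L I (\<lambda>_. 1) (\<lambda>_. k)) = k * card I"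
  by (simp add: cands_def)

lemma fu_feasible:
  assumes pos: "\<forall>i\<in>{1..n}. L i > 0" and k: "k > 0" and i: "i \<in> {1..n}"
  shows "feasible L n k (L i / of_nat k)"
proof -
  have Li: "L i > 0" using pos i by auto
  have "int k = \<lfloor>L i / (L i / of_nat k)\<rfloor>" using Li k by simp
  also have "\<dots> \<le> (\<Sum>j\<in>{1..n}. \<lfloor>L j / (L i / of_nat k)\<rfloor>)"
    by (rule member_le_sum) (use i pos Li k in \<open>auto simp: less_imp_le\<close>)
  finally show ?thesis using Li k by (simp add: feasible_def m_cnt_def)
qed

theorem mainTheorem6:
  fixes L :: "nat \<Rightarrow> rat" and n k :: nat
  assumes "n \<ge> 1"
    and "\<forall>i\<in>{1..n}. L i > 0"
    and "k > 0"
    and "cutoff L n k \<noteq> lstar L n k"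
  shows "admissible L n k (Ico L n k) (\<lambda>_. 1) (\<lambda>_. k) \<and>
         size (cands L (Ico L n k) (\<lambda>_. 1) (\<lambda>_. k)) = k * card (Ico L n k) \<and>
         k * card (Ico L n k) \<le> k * min (k - 1) n \<and>
         (inj_on L {1..n} \<longrightarrow>
            size (cands L (Ico L n k) (\<lambda>_. 1) (\<lambda>_. k)) = k * min (k - 1) n)"
proof -
  note pos = assms(2) and k = assms(3)
  have finI: "finite (Ico L n k)" by (simp add: Ico_def)
  have Isub: "Ico L n k \<subseteq> {1..n}" by (auto simp: Ico_def)
  have sz: "size (cands L (Ico L n k) (\<lambda>_. 1) (\<lambda>_. k)) = k * card (Ico L n k)"
    using finI by (rule size_cands)
  have fu: "\<forall>i\<in>Ico L n k. feasible L n k (L i / of_nat k)"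
    using fu_feasible[OF pos k] Isub by auto
  show ?thesis
  proof (cases "k \<le> n")
    case False
    then have co: "cutoff L n k = 0" by (simp add: cutoff_def)
    have IE: "Ico L n k = {1..n}" using pos by (auto simp: Ico_def co)
    have mn: "min (k - 1) n = n" using False by simp
    show ?thesis unfolding admissible_def using sz fu k IE mn by auto
  next
    case True
    define zs where "zs = sort (map L [1..<n+1])"
    have lz: "length zs = n" by (simp add: zs_def)
    define c where "c = zs ! (n - k)"
    have co: "cutoff L n k = c"
    proof -
      have "cutoff L n k = rev zs ! (k - 1)" using True by (simp add: cutoff_def kth_largest_def zs_def del: upt_Suc)
      also have "\<dots> = c" using True k lz by (simp add: rev_nth c_def)
      finally show ?thesis .
    qed
    have sorted: "sorted zs" by (simp add: zs_def)
    have "c \<in> set zs" using lz True k by (simp add: c_def)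
    then have c0: "c > 0" using pos by (auto simp: zs_def)
    have cnt: "card {i\<in>{1..n}. P (L i)} = card {i. i < n \<and> P (zs ! i)}" for P
      by (rule count_sort) (simp add: zs_def)
    have A: "card {i\<in>{1..n}. L i > c} \<le> k - 1"
    proof -
      have "{i. i < n \<and> c < zs ! i} \<subseteq> {n-k+1..<n}"
      proof
        fix i assume "i \<in> {i. i < n \<and> c < zs ! i}"
        then have i: "i < n" "c < zs ! i" by auto
        have "\<not> i \<le> n - k"
        proof
          assume "i \<le> n - k"
          then have "zs ! i \<le> zs ! (n-k)" using sorted lz True k by (intro sorted_nth_mono) auto
          then show False using i c_def by simp
        qed
        then show "i \<in> {n-k+1..<n}" using i by auto
      qed
      then have "card {i. i < n \<and> c < zs ! i} \<le> card {n-k+1..<n}" by (rule card_mono[rotated]) simp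
      then show ?thesis using cnt[of "\<lambda>x. c < x"] True by simp
    qed
    have C: "card {i\<in>{1..n}. L i \<ge> c} \<ge> k"
    proof -
      have "{n-k..<n} \<subseteq> {i. i < n \<and> c \<le> zs ! i}"
        using sorted lz True k by (auto simp: c_def intro!: sorted_nth_mono)
      then have "card {n-k..<n} \<le> card {i. i < n \<and> c \<le> zs ! i}" by (rule card_mono[rotated]) simp
      then show ?thesis using cnt[of "\<lambda>x. c \<le> x"] True by simp
    qed
    have cf: "feasible L n k c"
      using m_ge_card[of c c n L] c0 pos C by (simp add: feasible_def)
    have ls: "feasible L n k (lstar L n k)" "\<And>y. feasible L n k y \<Longrightarrow> y \<le> lstar L n k"
      using lstar_props[OF cf pos k] by auto
    have comp: "feasible L n k (L i') \<and> L i' \<noteq> lstar L n k" if i': "i' \<in> {1..n} - Ico L n k" for i'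
    proof
      have le: "L i' \<le> c" and Lp: "L i' > 0" using i' pos co by (auto simp: Ico_def)
      show f: "feasible L n k (L i')"
        using m_ge_card[of "L i'" c n L] le Lp pos C by (simp add: feasible_def)
      show "L i' \<noteq> lstar L n k"
      proof
        assume "L i' = lstar L n k"
        moreover have "c \<le> lstar L n k" using ls(2)[OF cf] .
        ultimately show False using le assms(4) co by simp
      qed
    qed
    have mn: "min (k - 1) n = k - 1" using True by simp
    have cardI: "card (Ico L n k) \<le> k - 1" using A co by (simp add: Ico_def)
    have inj: "card (Ico L n k) = k - 1" if inj: "inj_on L {1..n}"
    proof -
      have dz: "distinct zs" unfolding zs_def using inj
        by (simp add: distinct_map atLeastLessThanSuc_atLeastAtMost del: upt_Suc)
      have "{n-k+1..<n} \<subseteq> {i. i < n \<and> c < zs ! i}"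
      proof
        fix i assume "i \<in> {n-k+1..<n}"
        then have i: "n - k < i" "i < n" by auto
        have "zs ! (n-k) \<le> zs ! i" using sorted lz i by (intro sorted_nth_mono) auto
        moreover have "zs ! (n-k) \<noteq> zs ! i" using dz lz i by (simp add: nth_eq_iff_index_eq)
        ultimately show "i \<in> {i. i < n \<and> c < zs ! i}" using i by (auto simp: c_def)
      qed
      then have "card {n-k+1..<n} \<le> card {i. i < n \<and> c < zs ! i}" by (rule card_mono[rotated]) simp
      then have "k - 1 \<le> card (Ico L n k)" using cnt[of "\<lambda>x. c < x"] True co
        by (simp add: Ico_def)
      then show ?thesis using cardI by simp
    qed
    show ?thesis unfolding admissible_def
      using sz fu k Isub comp mn cardI inj by auto
  qed
qed

end
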